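(* Let $(N,J,h)$ be a 2-dimensional almost Norden manifold and let $(\mathcal{C}(N),\varphi,\xi,\eta,g)$ be the cone over it (constructed as in the context). Then: (1) $(\mathcal{C}(N),\varphi,\xi,\eta,g)$ is an isotropic-cosymplectic B-metric manifold if and only if the square norm of $\nabla'J$ on $(N,J,h)$ satisfies $\|\nabla'J\|^2=4$; (2) $(N,J,h)$ is an isotropic-K\"ahler-Norden manifold if and only if the square norm of $\nabla\varphi$ on $(\mathcal{C}(N),\varphi,\xi,\eta,g)$ satisfies $\|\nabla\varphi\|^2=-\frac{4}{t^2}$.
   Context: An almost Norden manifold $(N,J,h)$ is a manifold $N$ with an almost complex structure $J$ and a pseudo-Riemannian metric $h$ satisfying $h(Jx,Jy)=-h(x,y)$; $\nabla'$ denotes the Levi-Civita connection of $h$. The cone is $\mathcal{C}(N)=\mathbb{R}^+\times N$, $t$ the coordinate on $\mathbb{R}^+=(0,\infty)$, with metric $g=t^2h+\mathrm{d}t^2$ and structure $\xi=\tfrac{\mathrm{d}}{\mathrm{d}t}$, $\eta=\mathrm{d}t$, $\varphi=J$ on vectors tangent to $N$, $\varphi\xi=0$; it is an almost contact B-metric manifold, i.e. $\varphi\xi=0$, $\varphi^2=-\mathrm{Id}+\eta\otimes\xi$, $\eta\circ\varphi=0$, $\eta(\xi)=1$, $g(\varphi x,\varphi y)=-g(x,y)+\eta(x)\eta(y)$. $\nabla$ is the Levi-Civita connection of $g$. With respect to a basis $\{e_i\}$ of a tangent space and the inverse matrices $(g^{ij})$, $(h^{ij})$ of the metric components, the square norms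 are $\|\nabla\varphi\|^2=g^{ij}g^{ks}g((\nabla_{e_i}\varphi)e_k,(\nabla_{e_j}\varphi)e_s)$ and $\|\nabla'J\|^2=h^{ij}h^{ks}h((\nabla'_{e_i}J)e_k,(\nabla'_{e_j}J)e_s)$ (summation convention). An almost contact B-metric manifold is isotropic-cosymplectic if $\|\nabla\varphi\|^2=0$; an almost Norden manifold is isotropic-K\"ahler-Norden if $\|\nabla'J\|^2=0$. *)

theory Defs
  imports "HOL-Analysis.Analysis"
begin

text \<open>A point of a coordinate chart is a vector in real^'n;
  a (0,2)-tensor field G is given by its components G p i j = G(e_i,e_j) at p, and a
  (1,1)-tensor field A by its components with A(e_j) = sum over a of A p a j e_a.\<close>

definition pd :: "(real^'n \<Rightarrow> real) \<Rightarrow> real^'n \<Rightarrow> 'n \<Rightarrow> real" where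
  "pd f p k = deriv (\<lambda>s. f (p + s *\<^sub>R axis k 1)) 0"

definition inv_metric :: "(real^'n \<Rightarrow> 'n \<Rightarrow> 'n \<Rightarrow> real) \<Rightarrow> real^'n \<Rightarrow> 'n \<Rightarrow> 'n \<Rightarrow> real" where
  "inv_metric G p i j = matrix_inv (\<chi> a b. G p a b) $ i $ j"

text \<open>Christoffel symbols of the Levi-Civita connection: nabla_{e_i} e_j = sum_k Gamma^k_ij e_k.\<close>
definition christoffel :: "(real^'n \<Rightarrow> 'n \<Rightarrow> 'n \<Rightarrow> real) \<Rightarrow> real^'n \<Rightarrow> 'n \<Rightarrow> 'n \<Rightarrow> 'n \<Rightarrow> real" where
  "christoffel G p k i j = (1/2) * (\<Sum>l\<in>UNIV. inv_metric G p k l *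
      (pd (\<lambda>q. G q j l) p i + pd (\<lambda>q. G q i l) p j - pd (\<lambda>q. G q i j) p l))"

text \<open>Component k of ((nabla_{e_i} A) e_j).\<close>
definition cov_deriv :: "(real^'n \<Rightarrow> 'n \<Rightarrow> 'n \<Rightarrow> real) \<Rightarrow> (real^'n \<Rightarrow> 'n \<Rightarrow> 'n \<Rightarrow> real)
     \<Rightarrow> real^'n \<Rightarrow> 'n \<Rightarrow> 'n \<Rightarrow> 'n \<Rightarrow> real" where
  "cov_deriv G A p i k j = pd (\<lambda>q. A q k j) p i
      + (\<Sum>m\<in>UNIV. christoffel G p k i m * A p m j)
      - (\<Sum>m\<in>UNIV. christoffel G p m i j * A p k m)"

definition sq_norm_cov :: "(real^'n \<Rightarrow> 'n \<Rightarrow> 'n \<Rightarrow> real) \<Rightarrow> (real^'n \<Rightarrow> 'n \<Rightarrow> 'n \<Rightarrow> real)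
     \<Rightarrow> real^'n \<Rightarrow> real" where
  "sq_norm_cov G A p = (\<Sum>i\<in>UNIV. \<Sum>j\<in>UNIV. \<Sum>k\<in>UNIV. \<Sum>s\<in>UNIV.
      inv_metric G p i j * inv_metric G p k s *
      (\<Sum>a\<in>UNIV. \<Sum>b\<in>UNIV. G p a b * cov_deriv G A p i a k * cov_deriv G A p j b s))"

definition almost_norden_on :: "(real^'n) set \<Rightarrow> (real^'n \<Rightarrow> 'n \<Rightarrow> 'n \<Rightarrow> real)
     \<Rightarrow> (real^'n \<Rightarrow> 'n \<Rightarrow> 'n \<Rightarrow> real) \<Rightarrow> bool" where
  "almost_norden_on U J h \<longleftrightarrow> open U \<and>
     (\<forall>i j. (\<lambda>q. h q i j) differentiable_on U \<and> (\<lambda>q. J q i j) differentiable_on U) \<and>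
     (\<forall>p\<in>U. (\<forall>i j. h p i j = h p j i) \<and> invertible (\<chi> a b. h p a b) \<and>
        (\<forall>i j. (\<Sum>k\<in>UNIV. J p i k * J p k j) = - (if i = j then 1 else 0)) \<and>
        (\<forall>i j. (\<Sum>a\<in>UNIV. \<Sum>b\<in>UNIV. h p a b * J p a i * J p b j) = - h p i j))"

text \<open>The cone R^+ x N in coordinates (t, x): index Inl () is the t-direction.\<close>
definition cone_pt :: "real \<Rightarrow> real^'n \<Rightarrow> real^(unit + 'n)" where
  "cone_pt t x = (\<chi> a. case a of Inl _ \<Rightarrow> t | Inr i \<Rightarrow> x $ i)"

definition cone_base :: "real^(unit + 'n) \<Rightarrow> real^'n" where
  "cone_base c = (\<chi> i. c $ Inr i)"

definition cone_metric :: "(real^'n \<Rightarrow> 'n \<Rightarrow> 'n \<Rightarrow> real) \<Rightarrow> real^(unit + 'n)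
     \<Rightarrow> unit + 'n \<Rightarrow> unit + 'n \<Rightarrow> real" where
  "cone_metric h c a b = (case (a, b) of
      (Inl _, Inl _) \<Rightarrow> 1
    | (Inr i, Inr j) \<Rightarrow> (c $ Inl ())^2 * h (cone_base c) i j
    | _ \<Rightarrow> 0)"

definition cone_phi :: "(real^'n \<Rightarrow> 'n \<Rightarrow> 'n \<Rightarrow> real) \<Rightarrow> real^(unit + 'n)
     \<Rightarrow> unit + 'n \<Rightarrow> unit + 'n \<Rightarrow> real" where
  "cone_phi J c a b = (case (a, b) of
      (Inr i, Inr j) \<Rightarrow> J (cone_base c) i j
    | _ \<Rightarrow> 0)"

definition isotropic_cosymplectic_cone :: "(real^'n) set \<Rightarrow> (real^'n \<Rightarrow> 'n \<Rightarrow> 'n \<Rightarrow> real)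
     \<Rightarrow> (real^'n \<Rightarrow> 'n \<Rightarrow> 'n \<Rightarrow> real) \<Rightarrow> bool" where
  "isotropic_cosymplectic_cone U J h \<longleftrightarrow>
     (\<forall>t>0. \<forall>x\<in>U. sq_norm_cov (cone_metric h) (cone_phi J) (cone_pt t x) = 0)"

definition isotropic_kaehler_norden :: "(real^'n) set \<Rightarrow> (real^'n \<Rightarrow> 'n \<Rightarrow> 'n \<Rightarrow> real)
     \<Rightarrow> (real^'n \<Rightarrow> 'n \<Rightarrow> 'n \<Rightarrow> real) \<Rightarrow> bool" where
  "isotropic_kaehler_norden U J h \<longleftrightarrow> (\<forall>x\<in>U. sq_norm_cov h J x = 0)"

end

theory Submission
  imports Defs
begin


lemma if_mult0: "(if P then a else 0) * (b::real) = (if P then a * b else 0)" by simp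

lemma swap3: "(\<Sum>m\<in>UNIV. \<Sum>a\<in>UNIV. \<Sum>b\<in>UNIV. f m a b) = (\<Sum>a\<in>UNIV. \<Sum>b\<in>UNIV. \<Sum>m\<in>UNIV. (f m a b :: real))"
proof -
  have "(\<Sum>m\<in>UNIV. \<Sum>a\<in>UNIV. \<Sum>b\<in>UNIV. f m a b) = (\<Sum>a\<in>UNIV. \<Sum>m\<in>UNIV. \<Sum>b\<in>UNIV. f m a b)"
    by (rule sum.swap)
  also have "\<dots> = (\<Sum>a\<in>UNIV. \<Sum>b\<in>UNIV. \<Sum>m\<in>UNIV. f m a b)"
    by (rule sum.cong[OF refl], rule sum.swap)
  finally show ?thesis .
qed

lemma alg:
  fixes H Hi Jm :: "'n::finite \<Rightarrow> 'n \<Rightarrow> real"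
  assumes R: "\<And>i j. (\<Sum>k\<in>UNIV. H i k * Hi k j) = (if i = j then 1 else 0)"
    and L: "\<And>i j. (\<Sum>k\<in>UNIV. Hi i k * H k j) = (if i = j then 1 else 0)"
    and sym: "\<And>i j. H i j = H j i"
    and J2: "\<And>i j. (\<Sum>k\<in>UNIV. Jm i k * Jm k j) = - (if i = j then 1 else 0)"
    and Nor: "\<And>i j. (\<Sum>a\<in>UNIV. \<Sum>b\<in>UNIV. H a b * Jm a i * Jm b j) = - H i j"
  shows "(\<Sum>i\<in>UNIV. \<Sum>j\<in>UNIV. Hi i j * (\<Sum>a\<in>UNIV. \<Sum>b\<in>UNIV. H a b * Jm a i * Jm b j)) = - real (card (UNIV::'n set))"
    "(\<Sum>i\<in>UNIV. \<Sum>j\<in>UNIV. \<Sum>k\<in>UNIV. \<Sum>s\<in>UNIV. Hi i j * Hi k s *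
          ((\<Sum>m\<in>UNIV. H i m * Jm m k) * (\<Sum>m\<in>UNIV. H j m * Jm m s))) = - real (card (UNIV::'n set))"
proof -
  have "(\<Sum>i\<in>UNIV. \<Sum>j\<in>UNIV. Hi i j * (\<Sum>a\<in>UNIV. \<Sum>b\<in>UNIV. H a b * Jm a i * Jm b j))
      = - (\<Sum>i\<in>UNIV. \<Sum>j\<in>UNIV. Hi i j * H j i)"
    by (simp only: Nor sym[of _ i for i] sum_negf mult_minus_right)
  also have "\<dots> = - real (card (UNIV::'n set))" by (simp add: L)
  finally show "(\<Sum>i\<in>UNIV. \<Sum>j\<in>UNIV. Hi i j * (\<Sum>a\<in>UNIV. \<Sum>b\<in>UNIV. H a b * Jm a i * Jm b j)) = - real (card (UNIV::'n set))" .
  define B where "B i k = (\<Sum>m\<in>UNIV. H i m * Jm m k)" for i k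
  have Bsym: "B k i = B i k" for i k
  proof -
    have "B k i = (\<Sum>m\<in>UNIV. (- (\<Sum>a\<in>UNIV. \<Sum>b\<in>UNIV. H a b * Jm a k * Jm b m)) * Jm m i)"
      unfolding B_def by (simp add: Nor)
    also have "\<dots> = - (\<Sum>m\<in>UNIV. \<Sum>a\<in>UNIV. \<Sum>b\<in>UNIV. H a b * Jm a k * (Jm b m * Jm m i))"
      by (simp only: sum_distrib_right sum_negf mult_minus_left mult.assoc)
    also have "\<dots> = - (\<Sum>a\<in>UNIV. \<Sum>b\<in>UNIV. \<Sum>m\<in>UNIV. H a b * Jm a k * (Jm b m * Jm m i))"
      by (rule arg_cong[where f=uminus], rule swap3)
    also have "\<dots> = - (\<Sum>a\<in>UNIV. \<Sum>b\<in>UNIV. H a b * Jm a k * (\<Sum>m\<in>UNIV. Jm b m * Jm m i))"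
      by (simp only: sum_distrib_left)
    also have "\<dots> = (\<Sum>a\<in>UNIV. H a i * Jm a k)"
      by (simp add: J2 sum_negf if_distrib cong: if_cong)
    also have "\<dots> = B i k" unfolding B_def by (intro sum.cong refl) (simp add: sym[of _ i] mult.commute)
    finally show ?thesis .
  qed
  have HB1: "(\<Sum>i\<in>UNIV. Hi i j * B i k) = Jm j k" for j k
  proof -
    have "(\<Sum>i\<in>UNIV. Hi i j * B i k) = (\<Sum>i\<in>UNIV. \<Sum>m\<in>UNIV. H m i * Hi i j * Jm m k)"
    proof (intro sum.cong refl)
      fix i show "Hi i j * B i k = (\<Sum>m\<in>UNIV. H m i * Hi i j * Jm m k)"
        unfolding B_def sum_distrib_left by (intro sum.cong refl) (simp add: sym[of i] mult_ac)
    qed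
    also have "\<dots> = (\<Sum>m\<in>UNIV. \<Sum>i\<in>UNIV. H m i * Hi i j * Jm m k)" by (rule sum.swap)
    also have "\<dots> = (\<Sum>m\<in>UNIV. (\<Sum>i\<in>UNIV. H m i * Hi i j) * Jm m k)"
      by (simp only: sum_distrib_right)
    finally show ?thesis by (simp add: R if_mult0)
  qed
  have HB2: "(\<Sum>s\<in>UNIV. Hi k s * B j s) = Jm k j" for j k
  proof -
    have "(\<Sum>s\<in>UNIV. Hi k s * B j s) = (\<Sum>s\<in>UNIV. \<Sum>m\<in>UNIV. Hi k s * H s m * Jm m j)"
    proof (intro sum.cong refl)
      fix s show "Hi k s * B j s = (\<Sum>m\<in>UNIV. Hi k s * H s m * Jm m j)"
        by (subst Bsym[of j s]) (simp only: B_def sum_distrib_left mult.assoc)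
    qed
    also have "\<dots> = (\<Sum>m\<in>UNIV. \<Sum>s\<in>UNIV. Hi k s * H s m * Jm m j)" by (rule sum.swap)
    also have "\<dots> = (\<Sum>m\<in>UNIV. (\<Sum>s\<in>UNIV. Hi k s * H s m) * Jm m j)"
      by (simp only: sum_distrib_right)
    finally show ?thesis by (simp add: L if_mult0)
  qed
  have "(\<Sum>i\<in>UNIV. \<Sum>j\<in>UNIV. \<Sum>k\<in>UNIV. \<Sum>s\<in>UNIV. Hi i j * Hi k s * (B i k * B j s))
      = (\<Sum>j\<in>UNIV. \<Sum>k\<in>UNIV. \<Sum>i\<in>UNIV. \<Sum>s\<in>UNIV. (Hi i j * B i k) * (Hi k s * B j s))"
    by (simp only: swap3[of "\<lambda>i j k. \<Sum>s\<in>UNIV. Hi i j * Hi k s * (B i k * B j s)"]) (simp only: mult_ac)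
  also have "\<dots> = (\<Sum>j\<in>UNIV. \<Sum>k\<in>UNIV. (\<Sum>i\<in>UNIV. Hi i j * B i k) * (\<Sum>s\<in>UNIV. Hi k s * B j s))"
    by (simp only: sum_product)
  also have "\<dots> = (\<Sum>j\<in>UNIV. \<Sum>k\<in>UNIV. Jm j k * Jm k j)" by (simp only: HB1 HB2)
  also have "\<dots> = - real (card (UNIV::'n set))" by (simp add: J2 sum_negf)
  finally show "(\<Sum>i\<in>UNIV. \<Sum>j\<in>UNIV. \<Sum>k\<in>UNIV. \<Sum>s\<in>UNIV. Hi i j * Hi k s *
          ((\<Sum>m\<in>UNIV. H i m * Jm m k) * (\<Sum>m\<in>UNIV. H j m * Jm m s))) = - real (card (UNIV::'n set))"
    unfolding B_def .
qed


lemma sum_cone: "(\<Sum>a\<in>(UNIV::(unit + 'n::finite) set). f a) = f (Inl ()) + (\<Sum>i\<in>UNIV. f (Inr i))"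
proof -
  have "(\<Sum>a\<in>(UNIV::(unit + 'n::finite) set). f a) = (\<Sum>a\<in>(UNIV <+> UNIV). f a)" by simp
  also have "\<dots> = (\<Sum>u\<in>UNIV. f (Inl u)) + (\<Sum>i\<in>UNIV. f (Inr i))"
    by (subst sum.Plus) (auto simp: o_def)
  also have "(\<Sum>u\<in>(UNIV::unit set). f (Inl u)) = f (Inl ())"
    by (simp add: UNIV_unit)
  finally show ?thesis .
qed

lemma cone_pt_Inl[simp]: "cone_pt t x $ Inl u = t" by (simp add: cone_pt_def)
lemma cone_pt_Inr[simp]: "cone_pt t x $ Inr i = x $ i" by (simp add: cone_pt_def)
lemma cone_base_pt[simp]: "cone_base (cone_pt t x) = x" by (simp add: cone_base_def vec_eq_iff)

lemma cone_shift_t: "cone_pt t x + s *\<^sub>R axis (Inl u) 1 = cone_pt (t + s) x"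
  unfolding vec_eq_iff by (intro allI, case_tac i) (auto simp: axis_def)
lemma cone_shift_x: "cone_pt t x + s *\<^sub>R axis (Inr k) 1 = cone_pt t (x + s *\<^sub>R axis k 1)"
  unfolding vec_eq_iff by (intro allI, case_tac i) (auto simp: axis_def)

lemma matrix_inv_props:
  fixes A :: "real^'n^'n"
  assumes "invertible A"
  shows "A ** matrix_inv A = mat 1" "matrix_inv A ** A = mat 1"
  using someI_ex[OF assms[unfolded invertible_def]] unfolding matrix_inv_def by auto

lemma matrix_inv_unique:
  fixes A B :: "real^'n^'n"
  assumes "A ** B = mat 1" "B ** A = mat 1"
  shows "matrix_inv A = B"
proof -
  have inv: "invertible A" using assms invertible_def by blast
  have "matrix_inv A = matrix_inv A ** (A ** B)" using assms by (simp add: matrix_mul_rid)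
  also have "\<dots> = (matrix_inv A ** A) ** B" by (simp add: matrix_mul_assoc)
  also have "\<dots> = B" using matrix_inv_props(2)[OF inv] by (simp add: matrix_mul_lid)
  finally show ?thesis .
qed

lemma pd_cone_metric_t:
  "pd (\<lambda>q. cone_metric h q a b) (cone_pt t x) (Inl u) =
     (case (a,b) of (Inr i, Inr j) \<Rightarrow> 2*t*h x i j | _ \<Rightarrow> 0)"
proof -
  have "pd (\<lambda>q. cone_metric h q a b) (cone_pt t x) (Inl u) =
        deriv (\<lambda>s. cone_metric h (cone_pt (t+s) x) a b) 0"
    by (simp add: pd_def cone_shift_t)
  also have "\<dots> = (case (a,b) of (Inr i, Inr j) \<Rightarrow> 2*t*h x i j | _ \<Rightarrow> 0)"
  proof (cases a; cases b)
    fix i j assume ab: "a = Inr i" "b = Inr j"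
    have "((\<lambda>s. (t+s)^2 * h x i j) has_real_derivative 2*t*h x i j) (at 0)"
      by (auto intro!: derivative_eq_intros)
    then show ?thesis using ab by (simp add: cone_metric_def DERIV_imp_deriv)
  qed (simp_all add: cone_metric_def)
  finally show ?thesis .
qed

lemma diff_line:
  assumes "(\<lambda>q. f q) differentiable at (x::real^'n)"
  shows "(\<lambda>s. f (x + s *\<^sub>R axis k 1)) differentiable at (0::real)"
proof -
  have "(\<lambda>s::real. x + s *\<^sub>R axis k 1) differentiable at 0"
    by (auto intro!: derivative_intros)
  then have "f \<circ> (\<lambda>s::real. x + s *\<^sub>R axis k 1) differentiable at 0"
    by (rule differentiable_chain_at) (simp add: assms)
  then show ?thesis by (simp add: o_def)
qed

lemma pd_cone_metric_x:
  assumes "\<And>i j. (\<lambda>q. h q i j) differentiable at x"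
  shows "pd (\<lambda>q. cone_metric h q a b) (cone_pt t x) (Inr k) =
     (case (a,b) of (Inr i, Inr j) \<Rightarrow> t^2 * pd (\<lambda>q. h q i j) x k | _ \<Rightarrow> 0)"
proof -
  have "pd (\<lambda>q. cone_metric h q a b) (cone_pt t x) (Inr k) =
        deriv (\<lambda>s. cone_metric h (cone_pt t (x + s *\<^sub>R axis k 1)) a b) 0"
    by (simp add: pd_def cone_shift_x)
  also have "\<dots> = (case (a,b) of (Inr i, Inr j) \<Rightarrow> t^2 * pd (\<lambda>q. h q i j) x k | _ \<Rightarrow> 0)"
  proof (cases a; cases b)
    fix i j assume ab: "a = Inr i" "b = Inr j"
    let ?f = "\<lambda>s. h (x + s *\<^sub>R axis k 1) i j"
    have "?f differentiable at 0" using diff_line[OF assms] .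
    then have "(?f has_real_derivative deriv ?f 0) (at 0)"
      using DERIV_deriv_iff_real_differentiable by blast
    then have "((\<lambda>s. t^2 * ?f s) has_real_derivative t^2 * deriv ?f 0) (at 0)"
      by (rule DERIV_cmult)
    then show ?thesis using ab by (simp add: cone_metric_def DERIV_imp_deriv pd_def)
  qed (simp_all add: cone_metric_def)
  finally show ?thesis .
qed

lemma pd_cone_phi_t:
  "pd (\<lambda>q. cone_phi J q a b) (cone_pt t x) (Inl u) = 0"
proof -
  have "pd (\<lambda>q. cone_phi J q a b) (cone_pt t x) (Inl u) =
        deriv (\<lambda>s. cone_phi J (cone_pt t x) a b) 0"
    unfolding pd_def cone_shift_t cone_phi_def cone_base_pt by simp
  also have "\<dots> = 0" by (rule DERIV_imp_deriv) (rule DERIV_const)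
  finally show ?thesis .
qed

lemma pd_cone_phi_x:
  "pd (\<lambda>q. cone_phi J q a b) (cone_pt t x) (Inr k) =
     (case (a,b) of (Inr i, Inr j) \<Rightarrow> pd (\<lambda>q. J q i j) x k | _ \<Rightarrow> 0)"
proof -
  have "pd (\<lambda>q. cone_phi J q a b) (cone_pt t x) (Inr k) =
        deriv (\<lambda>s. cone_phi J (cone_pt t (x + s *\<^sub>R axis k 1)) a b) 0"
    by (simp add: pd_def cone_shift_x)
  also have "\<dots> = (case (a,b) of (Inr i, Inr j) \<Rightarrow> pd (\<lambda>q. J q i j) x k | _ \<Rightarrow> 0)"
  proof (cases a; cases b)
    fix i j assume ab: "a = Inr i" "b = Inr j"
    then show ?thesis by (simp add: cone_phi_def pd_def)
  qed (simp_all add: cone_phi_def DERIV_imp_deriv[OF DERIV_const])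
  finally show ?thesis .
qed

lemma hinv:
  assumes "invertible (\<chi> a b. h x a b)"
  shows "(\<Sum>k\<in>UNIV. h x i k * inv_metric h x k j) = (if i = j then 1 else 0)"
    "(\<Sum>k\<in>UNIV. inv_metric h x i k * h x k j) = (if i = j then 1 else 0)"
proof -
  have "((\<chi> a b. h x a b) ** matrix_inv (\<chi> a b. h x a b)) $ i $ j = mat 1 $ i $ j"
    using matrix_inv_props(1)[OF assms] by simp
  then show "(\<Sum>k\<in>UNIV. h x i k * inv_metric h x k j) = (if i = j then 1 else 0)"
    by (simp add: matrix_matrix_mult_def mat_def inv_metric_def)
  have "(matrix_inv (\<chi> a b. h x a b) ** (\<chi> a b. h x a b)) $ i $ j = mat 1 $ i $ j"
    using matrix_inv_props(2)[OF assms] by simp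
  then show "(\<Sum>k\<in>UNIV. inv_metric h x i k * h x k j) = (if i = j then 1 else 0)"
    by (simp add: matrix_matrix_mult_def mat_def inv_metric_def)
qed

lemma inv_cone:
  fixes h :: "real^'n \<Rightarrow> 'n \<Rightarrow> 'n \<Rightarrow> real"
  assumes t: "t > 0" and inv: "invertible (\<chi> a b. h x a b)"
  shows "inv_metric (cone_metric h) (cone_pt t x) a b =
    (case (a,b) of (Inl _, Inl _) \<Rightarrow> 1 | (Inr i, Inr j) \<Rightarrow> inv_metric h x i j / t^2 | _ \<Rightarrow> 0)"
proof -
  define G where "G = (\<chi> a b. cone_metric h (cone_pt t x) a b)"
  define N :: "real^(unit+'n)^(unit+'n)" where "N = (\<chi> a b. (case (a,b) of (Inl _, Inl _) \<Rightarrow> 1 | (Inr i, Inr j) \<Rightarrow> inv_metric h x i j / t^2 | _ \<Rightarrow> 0))"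
  have tt: "t^2 \<noteq> 0" using t by simp
  have "G ** N = mat 1"
    unfolding vec_eq_iff
  proof (intro allI)
    fix a b :: "unit + 'n"
    show "(G ** N) $ a $ b = mat 1 $ a $ b"
    proof (cases a; cases b)
      fix i j assume ab: "a = Inr i" "b = Inr j"
      have "(\<Sum>k\<in>UNIV. t\<^sup>2 * h x i k * (inv_metric h x k j / t\<^sup>2)) = (\<Sum>k\<in>UNIV. h x i k * inv_metric h x k j)"
        using tt by (intro sum.cong) auto
      then show ?thesis using ab hinv(1)[of h x i j, OF inv]
        by (simp add: matrix_matrix_mult_def mat_def G_def N_def sum_cone cone_metric_def)
    qed (auto simp: matrix_matrix_mult_def mat_def G_def N_def sum_cone cone_metric_def)
  qed
  moreover have "N ** G = mat 1"
    unfolding vec_eq_iff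
  proof (intro allI)
    fix a b :: "unit + 'n"
    show "(N ** G) $ a $ b = mat 1 $ a $ b"
    proof (cases a; cases b)
      fix i j assume ab: "a = Inr i" "b = Inr j"
      have "(\<Sum>k\<in>UNIV. inv_metric h x i k / t\<^sup>2 * (t\<^sup>2 * h x k j)) = (\<Sum>k\<in>UNIV. inv_metric h x i k * h x k j)"
        using tt by (intro sum.cong) auto
      then show ?thesis using ab hinv(2)[of h x i j, OF inv]
        by (simp add: matrix_matrix_mult_def mat_def G_def N_def sum_cone cone_metric_def)
    qed (auto simp: matrix_matrix_mult_def mat_def G_def N_def sum_cone cone_metric_def)
  qed
  ultimately have "matrix_inv G = N" by (rule matrix_inv_unique)
  moreover have "inv_metric (cone_metric h) (cone_pt t x) a b = matrix_inv G $ a $ b"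
    by (simp add: inv_metric_def G_def)
  ultimately show ?thesis by (simp add: N_def)
qed

lemma chr_cone:
  fixes h :: "real^'n \<Rightarrow> 'n \<Rightarrow> 'n \<Rightarrow> real"
  assumes t: "t > 0" and inv: "invertible (\<chi> a b. h x a b)"
    and sym: "\<And>i j. h x i j = h x j i"
    and dif: "\<And>i j. (\<lambda>q. h q i j) differentiable at x"
  shows "christoffel (cone_metric h) (cone_pt t x) a b c =
    (case a of Inl _ \<Rightarrow> (case (b,c) of (Inr i, Inr j) \<Rightarrow> - t * h x i j | _ \<Rightarrow> 0)
     | Inr k \<Rightarrow> (case (b,c) of (Inl _, Inr j) \<Rightarrow> (if k = j then 1/t else 0)
                  | (Inr i, Inl _) \<Rightarrow> (if k = i then 1/t else 0)
                  | (Inr i, Inr j) \<Rightarrow> christoffel h x k i j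
                  | _ \<Rightarrow> 0))"
proof -
  note S = christoffel_def sum_cone inv_cone[where h=h and x=x, OF t inv] pd_cone_metric_t pd_cone_metric_x[OF dif]
  have tt: "t \<noteq> 0" using t by simp
  have A: "(\<Sum>l\<in>UNIV. inv_metric h x k l * (2*t*h x j l) / t^2) = (if k = j then 2/t else 0)" for k j
  proof -
    have "(\<Sum>l\<in>UNIV. inv_metric h x k l * (2*t*h x j l) / t^2) = (2/t) * (\<Sum>l\<in>UNIV. inv_metric h x k l * h x l j)"
      unfolding sum_distrib_left using tt by (intro sum.cong) (auto simp: sym[of j] power2_eq_square)
    then show ?thesis using hinv(2)[where h=h and x=x and i=k and j=j, OF inv] by simp
  qed
  show ?thesis
  proof (cases a; cases b; cases c)
    fix k i j assume abc: "a = Inr k" "b = Inr i" "c = Inr j"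
    have "(\<Sum>l\<in>UNIV. inv_metric h x k l / t^2 * (t^2 * pd (\<lambda>q. h q j l) x i + t^2 * pd (\<lambda>q. h q i l) x j - t^2 * pd (\<lambda>q. h q i j) x l))
       = (\<Sum>l\<in>UNIV. inv_metric h x k l * (pd (\<lambda>q. h q j l) x i + pd (\<lambda>q. h q i l) x j - pd (\<lambda>q. h q i j) x l))"
      using tt by (intro sum.cong) (auto simp: field_simps)
    then show ?thesis using abc by (simp add: S)
  qed (auto simp: S A)
qed

lemma cone_phi_pt: "cone_phi J (cone_pt t x) a b = (case (a,b) of (Inr i, Inr j) \<Rightarrow> J x i j | _ \<Rightarrow> 0)"
  unfolding cone_phi_def cone_base_pt by simp


lemma cov_cone:
  fixes h J :: "real^'n \<Rightarrow> 'n \<Rightarrow> 'n \<Rightarrow> real"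
  assumes t: "t > 0" and inv: "invertible (\<chi> a b. h x a b)"
    and sym: "\<And>i j. h x i j = h x j i"
    and dif: "\<And>i j. (\<lambda>q. h q i j) differentiable at x"
  shows "cov_deriv (cone_metric h) (cone_phi J) (cone_pt t x) a k j =
    (case a of Inl _ \<Rightarrow> 0
     | Inr i \<Rightarrow> (case (k,j) of (Inr k', Inr j') \<Rightarrow> cov_deriv h J x i k' j'
                  | (Inl _, Inr j') \<Rightarrow> - t * (\<Sum>m\<in>UNIV. h x i m * J x m j')
                  | (Inr k', Inl _) \<Rightarrow> - J x k' i / t
                  | _ \<Rightarrow> 0))"
  by (cases a; cases k; cases j)
     (simp_all add: cov_deriv_def sum_cone chr_cone[where h=h and x=x, OF t inv sym dif]
      cone_phi_pt pd_cone_phi_t pd_cone_phi_x if_mult0 sum_negf sum_distrib_left mult.assoc)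

lemma cone_metric_pt: "cone_metric h (cone_pt t x) a b = (case (a,b) of (Inl _, Inl _) \<Rightarrow> 1 | (Inr i, Inr j) \<Rightarrow> t^2 * h x i j | _ \<Rightarrow> 0)"
  unfolding cone_metric_def cone_base_pt cone_pt_Inl by simp

lemma norm_cone:
  fixes h J :: "real^'n \<Rightarrow> 'n \<Rightarrow> 'n \<Rightarrow> real"
  assumes t: "t > 0" and inv: "invertible (\<chi> a b. h x a b)"
    and sym: "\<And>i j. h x i j = h x j i"
    and dif: "\<And>i j. (\<lambda>q. h q i j) differentiable at x"
  shows "sq_norm_cov (cone_metric h) (cone_phi J) (cone_pt t x) =
    (sq_norm_cov h J x
     + (\<Sum>i\<in>UNIV. \<Sum>j\<in>UNIV. \<Sum>k\<in>UNIV. \<Sum>s\<in>UNIV. inv_metric h x i j * inv_metric h x k s *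
          ((\<Sum>m\<in>UNIV. h x i m * J x m k) * (\<Sum>m\<in>UNIV. h x j m * J x m s)))
     + (\<Sum>i\<in>UNIV. \<Sum>j\<in>UNIV. inv_metric h x i j * (\<Sum>a\<in>UNIV. \<Sum>b\<in>UNIV. h x a b * J x a i * J x b j))) / t^2"
proof -
  have tt: "t \<noteq> 0" using t by simp
  let ?H = "inv_metric h x" and ?D = "cov_deriv h J x"
  have pt: "?H i ia * (\<Sum>ib\<in>UNIV. \<Sum>ic\<in>UNIV. t\<^sup>2 * h x ib ic * J x ib i * J x ic ia / (t * t)) / t\<^sup>2 +
          (\<Sum>ib\<in>UNIV. \<Sum>ic\<in>UNIV. ?H i ia * ?H ib ic *
               ((\<Sum>id\<in>UNIV. \<Sum>ie\<in>UNIV. t\<^sup>2 * h x id ie * ?D i id ib * ?D ia ie ic) +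
                t * (\<Sum>m\<in>UNIV. h x i m * J x m ib) * (t * (\<Sum>m\<in>UNIV. h x ia m * J x m ic))) / t ^ 4)
        = ((\<Sum>k\<in>UNIV. \<Sum>s\<in>UNIV. ?H i ia * ?H k s * (\<Sum>a\<in>UNIV. \<Sum>b\<in>UNIV. h x a b * ?D i a k * ?D ia b s))
           + (\<Sum>k\<in>UNIV. \<Sum>s\<in>UNIV. ?H i ia * ?H k s *
                ((\<Sum>m\<in>UNIV. h x i m * J x m k) * (\<Sum>m\<in>UNIV. h x ia m * J x m s)))
           + ?H i ia * (\<Sum>a\<in>UNIV. \<Sum>b\<in>UNIV. h x a b * J x a i * J x b ia)) / t^2" for i ia
  proof -
    have e1: "(\<Sum>ib\<in>UNIV. \<Sum>ic\<in>UNIV. t\<^sup>2 * h x ib ic * J x ib i * J x ic ia / (t * t)) =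
              (\<Sum>a\<in>UNIV. \<Sum>b\<in>UNIV. h x a b * J x a i * J x b ia)"
      using tt by (intro sum.cong refl) (simp add: power2_eq_square)
    have e2: "(\<Sum>id\<in>UNIV. \<Sum>ie\<in>UNIV. t\<^sup>2 * h x id ie * ?D i id ib * ?D ia ie ic) =
              t^2 * (\<Sum>a\<in>UNIV. \<Sum>b\<in>UNIV. h x a b * ?D i a ib * ?D ia b ic)" for ib ic
      by (simp add: sum_distrib_left mult.assoc)
    have e3: "?H i ia * ?H ib ic *
               (t^2 * (\<Sum>a\<in>UNIV. \<Sum>b\<in>UNIV. h x a b * ?D i a ib * ?D ia b ic) +
                t * (\<Sum>m\<in>UNIV. h x i m * J x m ib) * (t * (\<Sum>m\<in>UNIV. h x ia m * J x m ic))) / t ^ 4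
           = (?H i ia * ?H ib ic * (\<Sum>a\<in>UNIV. \<Sum>b\<in>UNIV. h x a b * ?D i a ib * ?D ia b ic)
              + ?H i ia * ?H ib ic * ((\<Sum>m\<in>UNIV. h x i m * J x m ib) * (\<Sum>m\<in>UNIV. h x ia m * J x m ic))) / t^2"
      for ib ic using tt by (simp add: field_simps power2_eq_square power4_eq_xxxx)
    show ?thesis
      unfolding e1 e2 e3 unfolding sum_divide_distrib[symmetric] sum.distrib add_divide_distrib by simp
  qed
  show ?thesis
    unfolding sq_norm_cov_def
    apply (simp add: sum_cone inv_cone[where h=h and x=x, OF t inv] cov_cone[where h=h and x=x, OF t inv sym dif] cone_metric_pt)
    unfolding pt unfolding sum_divide_distrib[symmetric] sum.distrib add_divide_distrib by simp
qed


lemma norm_formula: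
  fixes U :: "(real^'n) set" and J h :: "real^'n \<Rightarrow> 'n \<Rightarrow> 'n \<Rightarrow> real"
  assumes an: "almost_norden_on U J h" and x: "x \<in> U" and t: "t > 0"
  shows "sq_norm_cov (cone_metric h) (cone_phi J) (cone_pt t x) =
         (sq_norm_cov h J x - 2 * real (card (UNIV::'n set))) / t^2"
proof -
  have op: "open U" and dU: "\<And>i j. (\<lambda>q. h q i j) differentiable_on U"
    and sym: "\<And>i j. h x i j = h x j i" and inv: "invertible (\<chi> a b. h x a b)"
    and J2: "\<And>i j. (\<Sum>k\<in>UNIV. J x i k * J x k j) = - (if i = j then 1 else 0)"
    and Nor: "\<And>i j. (\<Sum>a\<in>UNIV. \<Sum>b\<in>UNIV. h x a b * J x a i * J x b j) = - h x i j"
    using an x unfolding almost_norden_on_def by auto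
  have dif: "\<And>i j. (\<lambda>q. h q i j) differentiable at x"
    using dU op x differentiable_on_eq_differentiable_at by blast
  note A = alg[where H="h x" and Hi="inv_metric h x" and Jm="J x",
      OF hinv(1)[where h=h and x=x, OF inv] hinv(2)[where h=h and x=x, OF inv] sym J2 Nor]
  show ?thesis
    unfolding norm_cone[where h=h and x=x, OF t inv sym dif] A by simp
qed

theorem theorem3p2:
  fixes U :: "(real^2) set" and J h :: "real^2 \<Rightarrow> 2 \<Rightarrow> 2 \<Rightarrow> real"
  assumes "almost_norden_on U J h"
  shows "(isotropic_cosymplectic_cone U J h \<longleftrightarrow> (\<forall>x\<in>U. sq_norm_cov h J x = 4))
       \<and> (isotropic_kaehler_norden U J h \<longleftrightarrow>
           (\<forall>t>0. \<forall>x\<in>U. sq_norm_cov (cone_metric h) (cone_phi J) (cone_pt t x) = - 4 / t^2))"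
proof -
  have F: "sq_norm_cov (cone_metric h) (cone_phi J) (cone_pt t x) = (sq_norm_cov h J x - 4) / t^2"
    if "x \<in> U" "t > 0" for x t
    using norm_formula[OF assms that] by simp
  have 1: "isotropic_cosymplectic_cone U J h \<longleftrightarrow> (\<forall>x\<in>U. sq_norm_cov h J x = 4)"
  proof
    assume H: "isotropic_cosymplectic_cone U J h"
    show "\<forall>x\<in>U. sq_norm_cov h J x = 4"
    proof
      fix x assume x: "x \<in> U"
      have "sq_norm_cov (cone_metric h) (cone_phi J) (cone_pt 1 x) = 0"
        using H x unfolding isotropic_cosymplectic_cone_def by simp
      then show "sq_norm_cov h J x = 4" using F[OF x, of 1] by simp
    qed
  next
    assume H: "\<forall>x\<in>U. sq_norm_cov h J x = 4"
    show "isotropic_cosymplectic_cone U J h"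
      unfolding isotropic_cosymplectic_cone_def using H F by simp
  qed
  have 2: "isotropic_kaehler_norden U J h \<longleftrightarrow>
           (\<forall>t>0. \<forall>x\<in>U. sq_norm_cov (cone_metric h) (cone_phi J) (cone_pt t x) = - 4 / t^2)"
  proof
    assume H: "isotropic_kaehler_norden U J h"
    show "\<forall>t>0. \<forall>x\<in>U. sq_norm_cov (cone_metric h) (cone_phi J) (cone_pt t x) = - 4 / t^2"
      using H F unfolding isotropic_kaehler_norden_def by (simp add: diff_divide_distrib)
  next
    assume H: "\<forall>t>0. \<forall>x\<in>U. sq_norm_cov (cone_metric h) (cone_phi J) (cone_pt t x) = - 4 / t^2"
    show "isotropic_kaehler_norden U J h"
      unfolding isotropic_kaehler_norden_def
    proof
      fix x assume x: "x \<in> U"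
      have "sq_norm_cov (cone_metric h) (cone_phi J) (cone_pt 1 x) = - 4" using H x by force
      then show "sq_norm_cov h J x = 0" using F[OF x, of 1] by simp
    qed
  qed
  show ?thesis using 1 2 by blast
qed

end
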